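(* Let $\mathcal{H}=\bigotimes_{i=1}^m\mathcal{H}_i$ and let $S$ be an unextendible product basis of $\mathcal{H}$. Then $S$ is not completable even in a locally extended Hilbert space: for no choice of finite-dimensional spaces $\mathcal{H}_i'$ does there exist a set of pairwise orthogonal product states of $\mathcal{H}'=\bigotimes_{i=1}^m(\mathcal{H}_i\oplus\mathcal{H}_i')$, orthogonal to all elements of $S$, which together with $S$ forms an orthogonal basis of $\mathcal{H}'$.
   Context: A product state in a multipartite space $\bigotimes_i \mathcal{K}_i$ is a vector $\phi_1\otimes\cdots\otimes\phi_m$ with nonzero $\phi_i\in\mathcal{K}_i$. An (incomplete orthogonal) product basis is a set $S$ of pairwise orthogonal product states spanning a proper subspace $\mathcal{H}_S$ of $\mathcal{H}$; it is unextendible if $\mathcal{H}_S^\perp$ contains no product state. Elements of $\mathcal{H}$ are regarded as elements of $\mathcal{H}'$ via the natural inclusions $\mathcal{H}_i\subseteq\mathcal{H}_i\oplus\mathcal{H}_i'$. *)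

theory Defs
  imports Main "HOL-Library.Complex_Order" Complex_Main
begin

text \<open>Multipartite space \<open>H = C^{d 0} \<otimes> ... \<otimes> C^{d (m-1)}\<close>, realized concretely:
  a vector is a complex function on index tuples \<open>t :: nat \<Rightarrow> nat\<close>, supported on the box
  \<open>tuples d m\<close>.  Local factor \<open>H_i = C^{d i}\<close> is the set of \<open>nat \<Rightarrow> complex\<close> functions supported
  on \<open>{0..<d i}\<close>.  The local extension \<open>H_i \<oplus> H_i' = C^{d i + e i}\<close> contains \<open>H_i\<close> as the first
  \<open>d i\<close> coordinates, so the natural inclusion \<open>H \<subseteq> H'\<close> is the identity on functions.\<close>

definition tuples :: "(nat \<Rightarrow> nat) \<Rightarrow> nat \<Rightarrow> (nat \<Rightarrow> nat) set" where
  "tuples d m = {t. (\<forall>i<m. t i < d i) \<and> (\<forall>i\<ge>m. t i = 0)}"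

definition mspace :: "(nat \<Rightarrow> nat) \<Rightarrow> nat \<Rightarrow> ((nat \<Rightarrow> nat) \<Rightarrow> complex) set" where
  "mspace d m = {x. \<forall>t. t \<notin> tuples d m \<longrightarrow> x t = 0}"

definition lspace :: "nat \<Rightarrow> (nat \<Rightarrow> complex) set" where
  "lspace n = {\<phi>. \<forall>j\<ge>n. \<phi> j = 0}"

definition ip :: "(nat \<Rightarrow> nat) \<Rightarrow> nat \<Rightarrow> ((nat \<Rightarrow> nat) \<Rightarrow> complex) \<Rightarrow> ((nat \<Rightarrow> nat) \<Rightarrow> complex) \<Rightarrow> complex" where
  "ip d m x y = (\<Sum>t\<in>tuples d m. cnj (x t) * y t)"

definition tensor :: "nat \<Rightarrow> (nat \<Rightarrow> nat \<Rightarrow> complex) \<Rightarrow> ((nat \<Rightarrow> nat) \<Rightarrow> complex)" where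
  "tensor m \<phi> = (\<lambda>t. if (\<forall>i\<ge>m. t i = 0) then (\<Prod>i<m. \<phi> i (t i)) else 0)"

definition product_state :: "(nat \<Rightarrow> nat) \<Rightarrow> nat \<Rightarrow> ((nat \<Rightarrow> nat) \<Rightarrow> complex) \<Rightarrow> bool" where
  "product_state d m x \<longleftrightarrow>
     (\<exists>\<phi>. (\<forall>i<m. \<phi> i \<in> lspace (d i) \<and> \<phi> i \<noteq> (\<lambda>_. 0)) \<and> x = tensor m \<phi>)"

definition pairwise_orth :: "(nat \<Rightarrow> nat) \<Rightarrow> nat \<Rightarrow> ((nat \<Rightarrow> nat) \<Rightarrow> complex) set \<Rightarrow> bool" where
  "pairwise_orth d m S \<longleftrightarrow> (\<forall>x\<in>S. \<forall>y\<in>S. x \<noteq> y \<longrightarrow> ip d m x y = 0)"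

definition cspan :: "((nat \<Rightarrow> nat) \<Rightarrow> complex) set \<Rightarrow> ((nat \<Rightarrow> nat) \<Rightarrow> complex) set" where
  "cspan B = {x. \<exists>F c. finite F \<and> F \<subseteq> B \<and> x = (\<lambda>t. \<Sum>v\<in>F. c v * v t)}"

definition product_basis :: "(nat \<Rightarrow> nat) \<Rightarrow> nat \<Rightarrow> ((nat \<Rightarrow> nat) \<Rightarrow> complex) set \<Rightarrow> bool" where
  "product_basis d m S \<longleftrightarrow>
     (\<forall>x\<in>S. product_state d m x) \<and> pairwise_orth d m S \<and> cspan S \<noteq> mspace d m"

definition UPB :: "(nat \<Rightarrow> nat) \<Rightarrow> nat \<Rightarrow> ((nat \<Rightarrow> nat) \<Rightarrow> complex) set \<Rightarrow> bool" where
  "UPB d m S \<longleftrightarrow> product_basis d m S \<and>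
     \<not> (\<exists>y. product_state d m y \<and> (\<forall>x\<in>S. ip d m x y = 0))"

definition orth_basis :: "(nat \<Rightarrow> nat) \<Rightarrow> nat \<Rightarrow> ((nat \<Rightarrow> nat) \<Rightarrow> complex) set \<Rightarrow> bool" where
  "orth_basis d m B \<longleftrightarrow> B \<subseteq> mspace d m \<and> (\<forall>x\<in>B. x \<noteq> (\<lambda>_. 0)) \<and>
     pairwise_orth d m B \<and> cspan B = mspace d m"

end

theory Submission
  imports Defs "HOL-Library.FuncSet"
begin

lemma tuples_finite: "finite (tuples d m)"
proof -
  have "tuples d m \<subseteq> (\<lambda>f i. if i < m then f i else 0) ` (PiE {..<m} (\<lambda>i. {..<d i}))"
  proof
    fix t assume t: "t \<in> tuples d m"
    let ?f = "restrict t {..<m}"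
    have "?f \<in> PiE {..<m} (\<lambda>i. {..<d i})" using t by (auto simp: tuples_def)
    moreover have "t = (\<lambda>i. if i < m then ?f i else 0)" using t by (auto simp: tuples_def)
    ultimately show "t \<in> (\<lambda>f i. if i < m then f i else 0) ` (PiE {..<m} (\<lambda>i. {..<d i}))" by blast
  qed
  moreover have "finite (PiE {..<m} (\<lambda>i. {..<d i}))" by (rule finite_PiE) auto
  ultimately show ?thesis using finite_subset by blast
qed

lemma tuples_mono: "tuples d m \<subseteq> tuples (\<lambda>i. d i + e i) m"
  by (auto simp: tuples_def less_imp_le_nat trans_less_add1)

lemma ps_mspace:
  assumes "product_state d m x" shows "x \<in> mspace d m"
proof -
  obtain \<phi> where ph: "\<forall>i<m. \<phi> i \<in> lspace (d i) \<and> \<phi> i \<noteq> (\<lambda>_. 0)" and x: "x = tensor m \<phi>"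
    using assms by (auto simp: product_state_def)
  show ?thesis unfolding mspace_def
  proof (intro CollectI allI impI)
    fix t assume t: "t \<notin> tuples d m"
    show "x t = 0"
    proof (cases "\<forall>i\<ge>m. t i = 0")
      case True
      then obtain i where i: "i < m" "\<not> t i < d i" using t by (auto simp: tuples_def)
      then have "\<phi> i (t i) = 0" using ph by (auto simp: lspace_def)
      then have "(\<Prod>i<m. \<phi> i (t i)) = 0" using i by (intro prod_zero) auto
      then show ?thesis using True x by (simp add: tensor_def)
    next
      case False then show ?thesis using x by (auto simp: tensor_def)
    qed
  qed
qed

theorem lemma2:
  fixes d :: "nat \<Rightarrow> nat" and m :: nat
    and S :: "((nat \<Rightarrow> nat) \<Rightarrow> complex) set"
  assumes "UPB d m S"
  shows "\<not> (\<exists>(e :: nat \<Rightarrow> nat) T.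
              (\<forall>y\<in>T. product_state (\<lambda>i. d i + e i) m y) \<and>
              pairwise_orth (\<lambda>i. d i + e i) m T \<and>
              (\<forall>y\<in>T. \<forall>x\<in>S. ip (\<lambda>i. d i + e i) m x y = 0) \<and>
              orth_basis (\<lambda>i. d i + e i) m (S \<union> T))"
proof
  assume "\<exists>(e :: nat \<Rightarrow> nat) T.
              (\<forall>y\<in>T. product_state (\<lambda>i. d i + e i) m y) \<and>
              pairwise_orth (\<lambda>i. d i + e i) m T \<and>
              (\<forall>y\<in>T. \<forall>x\<in>S. ip (\<lambda>i. d i + e i) m x y = 0) \<and>
              orth_basis (\<lambda>i. d i + e i) m (S \<union> T)"
  then obtain e T where Tps: "\<forall>y\<in>T. product_state (\<lambda>i. d i + e i) m y"
    and Torth: "\<forall>y\<in>T. \<forall>x\<in>S. ip (\<lambda>i. d i + e i) m x y = 0"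
    and ob: "orth_basis (\<lambda>i. d i + e i) m (S \<union> T)" by blast
  define D where "D = (\<lambda>i. d i + e i)"
  define P where "P = (\<lambda>x::(nat \<Rightarrow> nat) \<Rightarrow> complex. \<lambda>t. if t \<in> tuples d m then x t else 0)"
  have Sps: "\<forall>x\<in>S. product_state d m x" and noext: "\<not> (\<exists>y. product_state d m y \<and> (\<forall>x\<in>S. ip d m x y = 0))"
    and prp: "cspan S \<noteq> mspace d m"
    using assms by (auto simp: UPB_def product_basis_def)
  have Smsp: "\<forall>x\<in>S. x \<in> mspace d m" using Sps ps_mspace by blast
  have PS: "P x = x" if "x \<in> mspace d m" for x
    using that by (auto simp: P_def mspace_def)
  have PT: "P y = (\<lambda>_. 0)" if y: "y \<in> T" for y
  proof -
    obtain \<phi> where ph: "\<forall>i<m. \<phi> i \<in> lspace (D i) \<and> \<phi> i \<noteq> (\<lambda>_. 0)" and yt: "y = tensor m \<phi>"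
      using Tps y by (auto simp: product_state_def D_def)
    define \<psi> where "\<psi> = (\<lambda>i j. if j < d i then \<phi> i j else 0)"
    have Py: "P y = tensor m \<psi>"
    proof
      fix t
      show "P y t = tensor m \<psi> t"
      proof (cases "t \<in> tuples d m")
        case True
        then have "(\<Prod>i<m. \<psi> i (t i)) = (\<Prod>i<m. \<phi> i (t i))"
          by (intro prod.cong) (auto simp: \<psi>_def tuples_def)
        then show ?thesis using True yt by (auto simp: P_def tensor_def tuples_def)
      next
        case False
        show ?thesis
        proof (cases "\<forall>i\<ge>m. t i = 0")
          case True
          then obtain i where i: "i < m" "\<not> t i < d i" using False by (auto simp: tuples_def)
          then have "\<psi> i (t i) = 0" by (simp add: \<psi>_def)
          then have "(\<Prod>i<m. \<psi> i (t i)) = 0" using i by (intro prod_zero) auto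
          then show ?thesis using True False by (simp add: tensor_def P_def)
        next
          case c: False then show ?thesis using False by (auto simp: tensor_def P_def)
        qed
      qed
    qed
    show ?thesis
    proof (cases "\<forall>i<m. \<psi> i \<noteq> (\<lambda>_. 0)")
      case True
      have psl: "\<forall>i<m. \<psi> i \<in> lspace (d i)" by (auto simp: \<psi>_def lspace_def)
      have pps: "product_state d m (P y)" unfolding product_state_def Py using True psl by blast
      have "\<forall>x\<in>S. ip d m x (P y) = 0"
      proof
        fix x assume xS: "x \<in> S"
        have xm: "x \<in> mspace d m" using Smsp xS by blast
        have "ip d m x (P y) = (\<Sum>t\<in>tuples d m. cnj (x t) * y t)"
          unfolding ip_def by (intro sum.cong) (auto simp: P_def)
        also have "\<dots> = (\<Sum>t\<in>tuples D m. cnj (x t) * y t)"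
          by (rule sum.mono_neutral_left)
             (use tuples_finite tuples_mono xm in \<open>auto simp: D_def mspace_def\<close>)
        also have "\<dots> = 0" using Torth y xS by (simp add: ip_def D_def)
        finally show "ip d m x (P y) = 0" .
      qed
      then show ?thesis using noext pps by blast
    next
      case False
      then obtain i where i: "i < m" "\<psi> i = (\<lambda>_. 0)" by blast
      show ?thesis
      proof
        fix t
        have "tensor m \<psi> t = 0"
        proof (cases "\<forall>i\<ge>m. t i = 0")
          case True
          have "(\<Prod>i<m. \<psi> i (t i)) = 0" using i by (intro prod_zero) (auto intro!: bexI[of _ i])
          then show ?thesis using True by (simp add: tensor_def)
        qed (auto simp: tensor_def)
        then show "P y t = 0" using Py by simp
      qed
    qed
  qed
  have cS: "cspan S \<subseteq> mspace d m"
  proof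
    fix x assume "x \<in> cspan S"
    then obtain F c where F: "finite F" "F \<subseteq> S" and x: "x = (\<lambda>t. \<Sum>v\<in>F. c v * v t)"
      by (auto simp: cspan_def)
    show "x \<in> mspace d m" unfolding mspace_def
    proof (intro CollectI allI impI)
      fix t assume "t \<notin> tuples d m"
      then have "\<And>v. v \<in> F \<Longrightarrow> c v * v t = 0" using F Smsp by (auto simp: mspace_def)
      then have "(\<Sum>v\<in>F. c v * v t) = 0" by (intro sum.neutral ballI)
      then show "x t = 0" using x by simp
    qed
  qed
  then obtain w where w: "w \<in> mspace d m" "w \<notin> cspan S" using prp by blast
  have "w \<in> mspace D m" using w(1) tuples_mono[of d m e] by (auto simp: mspace_def D_def)
  then have "w \<in> cspan (S \<union> T)" using ob by (simp add: orth_basis_def D_def)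
  then obtain F c where F: "finite F" "F \<subseteq> S \<union> T" and wF: "w = (\<lambda>t. \<Sum>v\<in>F. c v * v t)"
    by (auto simp: cspan_def)
  have "w = (\<lambda>t. \<Sum>v\<in>F \<inter> S. c v * v t)"
  proof
    fix t
    have "w t = P w t" using PS w(1) by simp
    also have "\<dots> = (\<Sum>v\<in>F. c v * P v t)"
      using wF unfolding P_def by simp
    also have "\<dots> = (\<Sum>v\<in>F \<inter> S. c v * P v t) + (\<Sum>v\<in>F - S. c v * P v t)"
      using F(1) by (rule sum.Int_Diff)
    also have "(\<Sum>v\<in>F - S. c v * P v t) = 0"
      proof (rule sum.neutral, rule ballI)
      fix v assume "v \<in> F - S"
      then have "v \<in> T" using F(2) by blast
      then show "c v * P v t = 0" using PT by simp
    qed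
    also have "(\<Sum>v\<in>F \<inter> S. c v * P v t) = (\<Sum>v\<in>F \<inter> S. c v * v t)"
      using PS Smsp by (intro sum.cong) auto
    finally show "w t = (\<Sum>v\<in>F \<inter> S. c v * v t)" by simp
  qed
  then have "w \<in> cspan S" using F(1) unfolding cspan_def by blast
  then show False using w(2) by blast
qed

end
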